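(* Let $(X_n,\|\cdot\|_n)_{n\ge1}$ be a sequence of Banach spaces and let $(X,\|\cdot\|)$ be the space defined in the context. (i) Let $m\ge1$ and $x_n\in X_n$ for $n=1,\dots,m$ with $\sum_{n=1}^m\|x_n\|_n>0$. Then there exist $d_1,\dots,d_m\in(0,1]$ such that $\|(x_1,\dots,x_m)\|=\sum_{n=1}^m d_n\|x_n\|_n$. (ii) Let $x=(x_1,x_2,\dots)\in X$ and suppose there exist $c>0$ and $k\in\mathbb{N}$ such that $\frac{\|x_n\|_n}{n}<c\le\|(x_1,\dots,x_k)\|$ for every $n>k$. Then $$\|x\|=\|(x_1,\dots,x_k)\|+\sum_{n=k+1}^\infty\Big(1-\frac1{n+1}\Big)\|x_n\|_n.$$ (iii) Let $x=(x_1,x_2,\dots)$ be a nonzero vector of $X$. Then there exists $k\in\mathbb{N}$ such that $$\|x\|=\|(x_1,\dots,x_k)\|+\sum_{n=k+1}^\infty\Big(1-\frac1{n+1}\Big)\|x_n\|_n.$$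
   Context: $c_{00}((X_n))$ is the vector space of sequences $(x_1,x_2,\dots)$ with $x_k\in X_k$ and only finitely many $x_k\ne0$; $(x_1,\dots,x_n)$ denotes $(x_1,\dots,x_n,0,0,\dots)$. On $c_{00}((X_n))$ define inductively $\|(x_1)\|=\|x_1\|_1$ (the norm of $X_1$) and, for $n\ge2$, $$\|(x_1,\dots,x_n)\|=\Big(1-\tfrac{1}{n+1}\Big)\big(\|x_n\|_n+\|(x_1,\dots,x_{n-1})\|\big)+\tfrac{1}{n+1}\max\Big\{\tfrac{\|x_n\|_n}{n},\ \|(x_1,\dots,x_{n-1})\|\Big\}.$$ $X$ is the completion of $(c_{00}((X_n)),\|\cdot\|)$; since $\frac12\sum\|x_n\|_n\le\|(x_n)\|\le\sum\|x_n\|_n$ on $c_{00}((X_n))$, $X$ is identified with the space of sequences $x=(x_n)$, $x_n\in X_n$, with $\sum_n\|x_n\|_n<\infty$, and $\|x\|=\lim_k\|(x_1,\dots,x_k)\|$. *)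

theory Defs
  imports "HOL-Analysis.Analysis"
begin

text \<open>The Banach spaces X_n (n \<ge> 1) are modelled as subspaces Xs n of a common real
  vector space 'a, each carrying its own norm nrm n; completeness is stated explicitly.\<close>

definition is_norm_on :: "'a::real_vector set \<Rightarrow> ('a \<Rightarrow> real) \<Rightarrow> bool" where
  "is_norm_on S N \<longleftrightarrow> subspace S \<and>
     (\<forall>x\<in>S. N x \<ge> 0) \<and> (\<forall>x\<in>S. N x = 0 \<longleftrightarrow> x = 0) \<and>
     (\<forall>x\<in>S. \<forall>y\<in>S. N (x + y) \<le> N x + N y) \<and>
     (\<forall>x\<in>S. \<forall>c::real. N (c *\<^sub>R x) = \<bar>c\<bar> * N x)"

definition is_banach_on :: "'a::real_vector set \<Rightarrow> ('a \<Rightarrow> real) \<Rightarrow> bool" where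
  "is_banach_on S N \<longleftrightarrow> is_norm_on S N \<and>
     (\<forall>f. (\<forall>i. f i \<in> S) \<and> (\<forall>e>0. \<exists>M. \<forall>p\<ge>M. \<forall>q\<ge>M. N (f p - f q) < e)
        \<longrightarrow> (\<exists>l\<in>S. (\<lambda>i. N (f i - l)) \<longlonglongrightarrow> 0))"

text \<open>normk N x k = \<parallel>(x_1,...,x_k)\<parallel> (indices start at 1; x 0 is ignored; normk N x 0 = 0).\<close>
fun normk :: "(nat \<Rightarrow> 'a \<Rightarrow> real) \<Rightarrow> (nat \<Rightarrow> 'a) \<Rightarrow> nat \<Rightarrow> real" where
  "normk N x 0 = 0"
| "normk N x (Suc n) =
     (if n = 0 then N 1 (x 1)
      else (1 - 1 / real (n + 2)) * (N (n + 1) (x (n + 1)) + normk N x n)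
           + (1 / real (n + 2)) * max (N (n + 1) (x (n + 1)) / real (n + 1)) (normk N x n))"

definition in_X :: "(nat \<Rightarrow> 'a set) \<Rightarrow> (nat \<Rightarrow> 'a \<Rightarrow> real) \<Rightarrow> (nat \<Rightarrow> 'a) \<Rightarrow> bool" where
  "in_X Xs N x \<longleftrightarrow> (\<forall>n\<ge>1. x n \<in> Xs n) \<and> summable (\<lambda>i. N (i + 1) (x (i + 1)))"

definition xnorm :: "(nat \<Rightarrow> 'a \<Rightarrow> real) \<Rightarrow> (nat \<Rightarrow> 'a) \<Rightarrow> real" where
  "xnorm N x = lim (\<lambda>k. normk N x k)"

definition tail :: "(nat \<Rightarrow> 'a \<Rightarrow> real) \<Rightarrow> (nat \<Rightarrow> 'a) \<Rightarrow> nat \<Rightarrow> real" where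
  "tail N x k = (\<Sum>i. (1 - 1 / real (i + k + 2)) * N (i + k + 1) (x (i + k + 1)))"

end

theory Submission
  imports Defs
begin

lemma normk_Suc2:
  "n \<ge> 1 \<Longrightarrow> normk N x (Suc n) =
     (1 - 1 / real (n + 2)) * (N (n + 1) (x (n + 1)) + normk N x n)
           + (1 / real (n + 2)) * max (N (n + 1) (x (n + 1)) / real (n + 1)) (normk N x n)"
  by simp

lemma part1:
  "m \<ge> 1 \<Longrightarrow> \<exists>d::nat \<Rightarrow> real. (\<forall>n\<in>{1..m}. 0 < d n \<and> d n \<le> 1)
          \<and> normk N x m = (\<Sum>n=1..m. d n * N n (x n))"
proof (induction m rule: nat_induct_at_least)
  case base
  show ?case by (rule exI[of _ "\<lambda>_. 1"]) simp
next
  case (Suc m)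
  then obtain d where d: "\<forall>n\<in>{1..m}. 0 < d n \<and> d n \<le> 1"
    and e: "normk N x m = (\<Sum>n=1..m. d n * N n (x n))" by blast
  define a where "a = N (m + 1) (x (m + 1))"
  define b where "b = normk N x m"
  define t where "t = 1 / real (m + 2)"
  have t0: "0 < t" "t \<le> 1/2" using Suc(1) by (auto simp: t_def field_simps)
  have ns: "normk N x (Suc m) = (1 - t) * (a + b) + t * max (a / real (m+1)) b"
    using Suc(1) by (simp add: a_def b_def t_def)
  show ?case
  proof (cases "a / real (m+1) \<ge> b")
    case True
    define d' where "d' = (\<lambda>i. if i = m+1 then (1 - t) + t / real (m+1) else (1 - t) * d i)"
    have s: "(\<Sum>n=1..m. d' n * N n (x n)) = (1 - t) * b"
      unfolding b_def e sum_distrib_left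
      by (rule sum.cong) (auto simp: d'_def)
    have "normk N x (Suc m) = (1 - t) * (a + b) + t * (a / real (m+1))"
      using True ns by simp
    also have "\<dots> = (\<Sum>n=1..Suc m. d' n * N n (x n))"
      using Suc(1) s by (simp add: d'_def a_def algebra_simps)
    finally have E: "normk N x (Suc m) = (\<Sum>n=1..Suc m. d' n * N n (x n))" .
    have "t / real (m+1) \<le> t" using t0 Suc(1) by (simp add: divide_le_eq)
    moreover have "0 < t / real (m+1)" using t0 Suc(1) by simp
    ultimately have "\<forall>n\<in>{1..Suc m}. 0 < d' n \<and> d' n \<le> 1"
    proof (intro ballI)
      fix n assume n: "n \<in> {1..Suc m}"
      show "0 < d' n \<and> d' n \<le> 1"
      proof (cases "n = m + 1")
        case True
        have q: "0 < 1 - t + t / real (m+1)" using \<open>0 < t / real (m+1)\<close> t0 by linarith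
        have q2: "1 - t + t / real (m+1) \<le> 1" using \<open>t / real (m+1) \<le> t\<close> by linarith
        show ?thesis using True q q2 by (simp add: d'_def)
      next
        case False
        then have "n \<in> {1..m}" using n by auto
        then have "0 < d n" "d n \<le> 1" using d by auto
        moreover have "0 < 1 - t" "1 - t \<le> 1" using t0 by auto
        ultimately show ?thesis using False
          by (simp add: d'_def mult_le_one)
      qed
    qed
    then show ?thesis using E by blast
  next
    case False
    define d' where "d' = (\<lambda>i. if i = m+1 then (1 - t) else d i)"
    have s: "(\<Sum>n=1..m. d' n * N n (x n)) = b"
      unfolding b_def e
      by (rule sum.cong) (auto simp: d'_def)
    have "normk N x (Suc m) = (1 - t) * (a + b) + t * b"
      using False ns by simp
    also have "\<dots> = (\<Sum>n=1..Suc m. d' n * N n (x n))"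
      using Suc(1) s by (simp add: d'_def a_def algebra_simps)
    finally have E: "normk N x (Suc m) = (\<Sum>n=1..Suc m. d' n * N n (x n))" .
    have "\<forall>n\<in>{1..Suc m}. 0 < d' n \<and> d' n \<le> 1"
      using d t0 by (auto simp: d'_def)
    then show ?thesis using E by blast
  qed
qed

lemma normk_nonneg:
  assumes "\<And>n. n \<ge> 1 \<Longrightarrow> N n (x n) \<ge> 0"
  shows "normk N x n \<ge> 0"
proof (induction n)
  case 0 then show ?case by simp
next
  case (Suc n)
  have "N (n+1) (x (n+1)) \<ge> 0" using assms by simp
  moreover have "1 / real (n + 2) \<le> 1" by (simp add: field_simps)
  ultimately show ?case using Suc assms[of 1]
    by (auto intro!: add_nonneg_nonneg mult_nonneg_nonneg)
qed

lemma normk_mono_Suc: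
  assumes "\<And>n. n \<ge> 1 \<Longrightarrow> N n (x n) \<ge> 0"
  shows "normk N x n \<le> normk N x (Suc n)"
proof (cases "n = 0")
  case True then show ?thesis using assms[of 1] by simp
next
  case False
  define a where "a = N (n + 1) (x (n + 1))"
  define b where "b = normk N x n"
  define t where "t = 1 / real (n + 2)"
  have a0: "a \<ge> 0" using assms a_def by simp
  have t0: "0 \<le> t" "t \<le> 1" by (auto simp: t_def field_simps)
  have ns: "normk N x (Suc n) = (1 - t) * (a + b) + t * max (a / real (n+1)) b"
    using False by (simp add: a_def b_def t_def)
  have "(1 - t) * a \<ge> 0" using a0 t0 by simp
  moreover have "t * max (a / real (n+1)) b \<ge> t * b" using t0 by (simp add: mult_left_mono)
  ultimately have "(1 - t) * (a + b) + t * max (a / real (n+1)) b \<ge> b"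
    by (simp add: algebra_simps)
  then show ?thesis using ns b_def by simp
qed

lemma normk_mono:
  assumes "\<And>n. n \<ge> 1 \<Longrightarrow> N n (x n) \<ge> 0" "m \<le> n"
  shows "normk N x m \<le> normk N x n"
  using lift_Suc_mono_le[of "normk N x", OF normk_mono_Suc[of N x, OF assms(1)] assms(2)] by blast

lemma part2_partial:
  assumes nn: "\<And>n. n \<ge> 1 \<Longrightarrow> N n (x n) \<ge> 0"
    and k: "k \<ge> 1" and c: "\<forall>n>k. N n (x n) / real n < c" "c \<le> normk N x k"
  shows "normk N x (j + k) = normk N x k +
     (\<Sum>i<j. (1 - 1 / real (i + k + 2)) * N (i + k + 1) (x (i + k + 1)))"
proof (induction j)
  case 0 then show ?case by simp
next
  case (Suc j)
  define a where "a = N (j + k + 1) (x (j + k + 1))"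
  define b where "b = normk N x (j + k)"
  define t where "t = 1 / real (j + k + 2)"
  have "b \<ge> normk N x k" unfolding b_def by (rule normk_mono[of N x, OF nn]) auto
  moreover have "a / real (j + k + 1) < c" using c(1)[rule_format, of "j+k+1"] a_def by simp
  ultimately have m: "max (a / real (j + k + 1)) b = b" using c(2) by simp
  have "normk N x (Suc j + k) = normk N x (Suc (j + k))" by simp
  also have "\<dots> = (1 - t) * (a + b) + t * max (a / real (j + k + 1)) b"
    using k by (simp add: a_def b_def t_def add.commute add.left_commute)
  also have "\<dots> = b + (1 - t) * a" using m by (simp add: algebra_simps)
  finally show ?case using Suc by (simp add: b_def a_def t_def)
qed

lemma part2:
  assumes nn: "\<And>n. n \<ge> 1 \<Longrightarrow> N n (x n) \<ge> 0"
    and sm: "summable (\<lambda>i. N (i + 1) (x (i + 1)))"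
    and cpos: "c > 0"
    and c: "\<forall>n>k. N n (x n) / real n < c \<and> c \<le> normk N x k"
  shows "xnorm N x = normk N x k + tail N x k"
proof -
  have ck: "c \<le> normk N x k" using c[rule_format, of "Suc k"] by simp
  have k: "k \<ge> 1"
  proof (rule ccontr)
    assume "\<not> k \<ge> 1" then have "k = 0" by simp
    then show False using ck cpos by simp
  qed
  define g where "g i = (1 - 1 / real (i + k + 2)) * N (i + k + 1) (x (i + k + 1))" for i
  have sm2: "summable (\<lambda>i. N (i + k + 1) (x (i + k + 1)))"
    using summable_ignore_initial_segment[OF sm, of k] by (simp add: add.assoc)
  have "summable g"
  proof (rule summable_comparison_test[OF _ sm2])
    show "\<exists>N0. \<forall>n\<ge>N0. norm (g n) \<le> N (n + k + 1) (x (n + k + 1))"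
    proof (intro exI allI impI)
      fix n
      have a0: "N (n + k + 1) (x (n + k + 1)) \<ge> 0" using nn by simp
      have "0 \<le> 1 - 1 / real (n + k + 2)" "1 - 1 / real (n + k + 2) \<le> 1"
        by (auto simp: field_simps)
      then show "norm (g n) \<le> N (n + k + 1) (x (n + k + 1))"
        using a0 by (simp add: g_def abs_mult mult_le_cancel_right1 mult_left_le_one_le)
    qed
  qed
  then have "(\<lambda>j. \<Sum>i<j. g i) \<longlonglongrightarrow> suminf g" by (rule summable_LIMSEQ)
  then have "(\<lambda>j. normk N x k + (\<Sum>i<j. g i)) \<longlonglongrightarrow> normk N x k + suminf g"
    by (intro tendsto_intros)
  moreover have "\<And>j. normk N x (j + k) = normk N x k + (\<Sum>i<j. g i)"
    unfolding g_def using part2_partial[of N x, OF nn k] c by auto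
  ultimately have "(\<lambda>j. normk N x (j + k)) \<longlonglongrightarrow> normk N x k + suminf g" by simp
  then have "normk N x \<longlonglongrightarrow> normk N x k + suminf g"
    by (rule LIMSEQ_offset)
  then have "xnorm N x = normk N x k + suminf g"
    unfolding xnorm_def by (rule limI)
  moreover have "g = (\<lambda>i. (1 - 1 / real (i + k + 2)) * N (i + k + 1) (x (i + k + 1)))"
    by (rule ext) (simp add: g_def)
  ultimately show ?thesis by (simp add: tail_def)
qed

theorem proposition1p5:
  fixes Xs :: "nat \<Rightarrow> 'a::real_vector set" and N :: "nat \<Rightarrow> 'a \<Rightarrow> real"
  assumes banach: "\<And>n. n \<ge> 1 \<Longrightarrow> is_banach_on (Xs n) (N n)"
  shows
   "(\<forall>(m::nat) (x::nat \<Rightarrow> 'a). m \<ge> 1 \<and> (\<forall>n\<in>{1..m}. x n \<in> Xs n)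
        \<and> (\<Sum>n=1..m. N n (x n)) > 0 \<longrightarrow>
      (\<exists>d::nat \<Rightarrow> real. (\<forall>n\<in>{1..m}. 0 < d n \<and> d n \<le> 1)
          \<and> normk N x m = (\<Sum>n=1..m. d n * N n (x n))))
  \<and> (\<forall>(x::nat \<Rightarrow> 'a) (c::real) (k::nat). in_X Xs N x \<and> c > 0
        \<and> (\<forall>n>k. N n (x n) / real n < c \<and> c \<le> normk N x k) \<longrightarrow>
      xnorm N x = normk N x k + tail N x k)
  \<and> (\<forall>x::nat \<Rightarrow> 'a. in_X Xs N x \<and> (\<exists>n\<ge>1. x n \<noteq> 0) \<longrightarrow>
      (\<exists>k\<ge>1. xnorm N x = normk N x k + tail N x k))"
proof -
  have NO: "is_norm_on (Xs n) (N n)" if "n \<ge> 1" for n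
  proof -
    have "is_banach_on (Xs n) (N n)" using banach that by blast
    then show ?thesis unfolding is_banach_on_def by (rule conjunct1)
  qed
  have Nn: "N n y \<ge> 0" if "n \<ge> 1" "y \<in> Xs n" for n y
  proof -
    have "\<forall>y\<in>Xs n. N n y \<ge> 0" using NO[OF that(1)] unfolding is_norm_on_def by (elim conjE)
    then show ?thesis using that(2) by blast
  qed
  have Np: "N n y > 0" if "n \<ge> 1" "y \<in> Xs n" "y \<noteq> 0" for n y
  proof -
    have "\<forall>y\<in>Xs n. N n y = 0 \<longleftrightarrow> y = 0" using NO[OF that(1)] unfolding is_norm_on_def by (elim conjE)
    then have "N n y \<noteq> 0" using that(2,3) by blast
    then show ?thesis using Nn[OF that(1,2)] by linarith
  qed
  have P2: "\<forall>(x::nat \<Rightarrow> 'a) (c::real) (k::nat). in_X Xs N x \<and> c > 0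
        \<and> (\<forall>n>k. N n (x n) / real n < c \<and> c \<le> normk N x k) \<longrightarrow>
      xnorm N x = normk N x k + tail N x k"
  proof (intro allI impI)
    fix x :: "nat \<Rightarrow> 'a" and c k
    assume h: "in_X Xs N x \<and> c > 0 \<and> (\<forall>n>k. N n (x n) / real n < c \<and> c \<le> normk N x k)"
    then have nn: "\<And>n. n \<ge> 1 \<Longrightarrow> N n (x n) \<ge> 0" using Nn unfolding in_X_def by blast
    show "xnorm N x = normk N x k + tail N x k"
      using part2[of N x, OF nn, of c k] h unfolding in_X_def by blast
  qed
  have P3: "\<forall>x::nat \<Rightarrow> 'a. in_X Xs N x \<and> (\<exists>n\<ge>1. x n \<noteq> 0) \<longrightarrow>
      (\<exists>k\<ge>1. xnorm N x = normk N x k + tail N x k)"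
  proof (intro allI impI)
    fix x :: "nat \<Rightarrow> 'a"
    assume h: "in_X Xs N x \<and> (\<exists>n\<ge>1. x n \<noteq> 0)"
    then have nn: "\<And>n. n \<ge> 1 \<Longrightarrow> N n (x n) \<ge> 0" using Nn unfolding in_X_def by blast
    from h obtain n0 where n0: "n0 \<ge> 1" "x n0 \<noteq> 0" by blast
    have a0: "N n0 (x n0) > 0" using Np h n0 unfolding in_X_def by blast
    have L: "normk N x n0 > 0"
    proof (cases "n0 = 1")
      case True then show ?thesis using a0 by simp
    next
      case False
      then obtain m where m: "n0 = Suc m" "m \<ge> 1" using n0 by (cases n0) auto
      define a where "a = N (m + 1) (x (m + 1))"
      define b where "b = normk N x m"
      define t where "t = 1 / real (m + 2)"
      have t0: "0 < t" "t < 1" by (auto simp: t_def field_simps)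
      have a: "0 < a" using a0 m a_def by simp
      have b: "0 \<le> b" unfolding b_def by (rule normk_nonneg[of N x, OF nn])
      have ns: "normk N x n0 = (1 - t) * (a + b) + t * max (a / real (m+1)) b"
        using m by (simp add: a_def b_def t_def)
      have "0 < (1 - t) * a" using a t0 by simp
      moreover have "0 \<le> (1 - t) * b" using b t0 by simp
      moreover have "0 \<le> t * max (a / real (m+1)) b" using b t0 by simp
      ultimately show ?thesis unfolding ns by (simp add: algebra_simps)
    qed
    have sm: "summable (\<lambda>i. N (i + 1) (x (i + 1)))" using h unfolding in_X_def by blast
    have "(\<lambda>i. N (i + 1) (x (i + 1))) \<longlonglongrightarrow> 0" using summable_LIMSEQ_zero[OF sm] .
    then have "(\<lambda>i. N (Suc i) (x (Suc i))) \<longlonglongrightarrow> 0" by simp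
    then have "(\<lambda>i. N i (x i)) \<longlonglongrightarrow> 0" by (rule LIMSEQ_imp_Suc)
    from LIMSEQ_D[OF this L] obtain M where M0: "\<forall>n\<ge>M. norm (N n (x n) - 0) < normk N x n0"
      by blast
    then have M: "\<forall>n\<ge>M. norm (N n (x n)) < normk N x n0" by simp
    define K where "K = max M n0"
    have K1: "K \<ge> 1" using n0 by (simp add: K_def)
    have LK: "normk N x n0 \<le> normk N x K" unfolding K_def by (rule normk_mono[of N x, OF nn]) simp_all
    have "\<forall>n>K. N n (x n) / real n < normk N x K \<and> normk N x K \<le> normk N x K"
    proof (intro allI impI conjI)
      fix n assume "n > K"
      then have n1: "n \<ge> 1" "n \<ge> M" by (auto simp: K_def)
      have a: "N n (x n) \<ge> 0" using nn n1 by simp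
      have "N n (x n) / real n \<le> N n (x n)" using a n1 by (simp add: divide_le_eq mult_le_cancel_left1)
      also have "\<dots> < normk N x n0" using M n1 a by auto
      finally show "N n (x n) / real n < normk N x K" using LK by simp
    qed simp
    moreover have "normk N x K > 0" using L LK by linarith
    ultimately have "xnorm N x = normk N x K + tail N x K"
      using P2[rule_format, of x "normk N x K" K] h by blast
    then show "\<exists>k\<ge>1. xnorm N x = normk N x k + tail N x k" using K1 by blast
  qed
  have P1: "\<forall>(m::nat) (x::nat \<Rightarrow> 'a). m \<ge> 1 \<and> (\<forall>n\<in>{1..m}. x n \<in> Xs n)
        \<and> (\<Sum>n=1..m. N n (x n)) > 0 \<longrightarrow>
      (\<exists>d::nat \<Rightarrow> real. (\<forall>n\<in>{1..m}. 0 < d n \<and> d n \<le> 1)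
          \<and> normk N x m = (\<Sum>n=1..m. d n * N n (x n)))"
    using part1 by blast
  show ?thesis by (intro conjI P1 P2 P3)
qed

end
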